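(* Let $q\le p$, $\tau^2>0$, $c>1$, let $H\in\mathbb{R}^{q\times p}$ have full rank $q$, let $\Sigma\in\mathbb{R}^{q\times q}$ be symmetric positive definite, and let $\lambda_1^{\Psi},\dots,\lambda_q^{\Psi}$ be the eigenvalues of $\Psi=\Sigma^{-1/2}HH^T\Sigma^{-1/2}$. If $$\sum_{i=1}^{q}\frac{1}{\left(1+(\tau^2\lambda_i^{\Psi})^{-1}\right)^2}>\frac{q}{c},$$ then $$(\sqrt{c}-1)\,\tau^2>\frac{1}{\max_{1\le i\le q}\lambda_i^{\Psi}}.$$
   Context: $\Sigma^{-1/2}$ is the symmetric positive definite inverse square root of $\Sigma$; $\Psi$ is symmetric positive definite, so all $\lambda_i^{\Psi}>0$. *)

theory Defs
  imports "HOL-Analysis.Analysis" "HOL-Computational_Algebra.Polynomial"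
begin

definition charpoly :: "real^'n^'n \<Rightarrow> real poly" where
  "charpoly A = det (\<chi> i j. (if i = j then [:0, 1:] else 0) - [:A $ i $ j:])"

definition symmetric_matrix :: "real^'n^'n \<Rightarrow> bool" where
  "symmetric_matrix A \<longleftrightarrow> transpose A = A"

definition pos_def_matrix :: "real^'n^'n \<Rightarrow> bool" where
  "pos_def_matrix A \<longleftrightarrow> symmetric_matrix A \<and> (\<forall>x. x \<noteq> 0 \<longrightarrow> x \<bullet> (A *v x) > 0)"

end

theory Submission
  imports Defs
begin

lemma poly_charpoly: "poly (charpoly A) x = det (\<chi> i j. (if i = j then x else 0) - A $ i $ j)"
  unfolding charpoly_def det_def
  by (auto simp add: poly_sum poly_prod poly_of_int intro!: sum.cong prod.cong)

lemma det0: fixes B :: "real^'n^'n" assumes "det B = 0" shows "\<exists>v. v \<noteq> 0 \<and> B *v v = 0"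
  by (metis assms det_I det_mul matrix_left_invertible_injective
    mult.commute vec.inj_iff_eq_0 vector_space_over_itself.scale_zero_left
    zero_neq_one)

lemma dot_transp: "x \<bullet> ((A::real^'n^'m) *v y) = (transpose A *v x) \<bullet> y"
  by (metis transpose_matrix_vector dot_lmul_matrix)

lemma posdef_mat:
  fixes H :: "real^'p^'q" and S :: "real^'q^'q"
  assumes "rank H = CARD('q)" and "pos_def_matrix S" and "x \<noteq> 0"
  shows "x \<bullet> ((S ** H ** transpose H ** S) *v x) > 0"
proof -
  have St: "transpose S = S" using assms(2) unfolding pos_def_matrix_def symmetric_matrix_def by simp
  have "S *v x \<noteq> 0" using assms(2,3) unfolding pos_def_matrix_def by force
  moreover have "inj ((*v) (transpose H))" using assms(1) full_rank_injective rank_transpose by metis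
  ultimately have ne: "transpose H *v (S *v x) \<noteq> 0"
    by (metis vec.inj_iff_eq_0)
  have "(S ** H ** transpose H ** S) *v x = S *v (H *v (transpose H *v (S *v x)))"
    by (simp add: matrix_vector_mul_assoc matrix_mul_assoc)
  hence "x \<bullet> ((S ** H ** transpose H ** S) *v x) = (S *v x) \<bullet> (H *v (transpose H *v (S *v x)))"
    using dot_transp St by (metis inner_commute)
  also have "\<dots> = (transpose H *v (S *v x)) \<bullet> (transpose H *v (S *v x))"
    by (metis dot_transp inner_commute)
  also have "\<dots> > 0" using ne by simp
  finally show ?thesis .
qed

lemma eig_pos:
  fixes A :: "real^'q^'q" and lam :: "'q \<Rightarrow> real"
  assumes pd: "\<And>x. x \<noteq> 0 \<Longrightarrow> x \<bullet> (A *v x) > 0"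
    and cp: "charpoly A = (\<Prod>i\<in>UNIV. [:- lam i, 1:])"
  shows "lam j > 0"
proof -
  have "poly (charpoly A) (lam j) = 0"
  proof -
    have "(\<Prod>i\<in>(UNIV::'q set). lam j - lam i) = 0" by (rule prod_zero) auto
    thus ?thesis unfolding cp by (simp add: poly_prod)
  qed
  hence "det (\<chi> i k. (if i = k then lam j else 0) - A $ i $ k) = 0" by (simp add: poly_charpoly)
  then obtain v where v: "v \<noteq> 0" "(\<chi> i k. (if i = k then lam j else 0) - A $ i $ k) *v v = 0"
    using det0 by blast
  have "(\<chi> i k. (if i = k then lam j else 0) - A $ i $ k) = lam j *\<^sub>R mat 1 - A"
    by (simp add: vec_eq_iff mat_def)
  with v have "lam j *\<^sub>R v = A *v v"
    by (simp add: matrix_vector_mult_diff_rdistrib scaleR_matrix_vector_assoc[symmetric])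
  hence "v \<bullet> (A *v v) = lam j * (v \<bullet> v)" by (metis inner_scaleR_right)
  moreover have "v \<bullet> (A *v v) > 0" using pd v(1) by blast
  moreover have "v \<bullet> v > 0" using v(1) by simp
  ultimately show ?thesis by (metis zero_less_mult_pos2)
qed

theorem proposition3p4:
  fixes H :: "real^'p^'q" and \<Sigma> S :: "real^'q^'q"
    and \<tau> c :: real and lam :: "'q \<Rightarrow> real"
  assumes "CARD('q) \<le> CARD('p)"
    and "\<tau>^2 > 0" and "c > 1"
    and "rank H = CARD('q)"
    and "pos_def_matrix \<Sigma>"
    and "pos_def_matrix S" and "S ** S = matrix_inv \<Sigma>"
    and "charpoly (S ** H ** transpose H ** S) = (\<Prod>i\<in>UNIV. [:- lam i, 1:])"
    and "(\<Sum>i\<in>UNIV. 1 / (1 + 1 / (\<tau>^2 * lam i))^2) > real CARD('q) / c"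
  shows "(sqrt c - 1) * \<tau>^2 > 1 / Max (range lam)"
proof -
  define t where "t = \<tau>^2"
  have t: "t > 0" using assms(2) t_def by simp
  have lp: "\<And>j. lam j > 0"
    using eig_pos[OF posdef_mat[OF assms(4) assms(6)] assms(8)] by blast
  define M where "M = Max (range lam)"
  have Mge: "\<And>i. lam i \<le> M" unfolding M_def by (simp add: Max_ge)
  have Mp: "M > 0" using Mge lp[of undefined] by (meson less_le_trans)
  define f where "f x = 1 / (1 + 1 / (t * x))^2" for x
  have feq: "f x = (t*x/(1+t*x))^2" if "x > 0" for x
    using that t unfolding f_def by (simp add: field_simps)
  have fmono: "f x \<le> f M" if "0 < x" "x \<le> M" for x
  proof -
    have tx: "t*x \<le> t*M" using that t by simp
    have p1: "1+t*x > 0" "1+t*M > 0" using that t Mp by (simp_all add: add_pos_pos)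
    have "t*x*(1+t*M) \<le> t*M*(1+t*x)" using tx by (simp add: algebra_simps)
    hence "t*x/(1+t*x) \<le> t*M/(1+t*M)" using p1 by (simp add: divide_simps)
    moreover have "0 \<le> t*x/(1+t*x)" using that t by simp
    ultimately show ?thesis using feq that Mp by (simp add: power_mono)
  qed
  have "real CARD('q) / c < (\<Sum>i\<in>UNIV. f (lam i))" using assms(9) unfolding f_def t_def .
  also have "\<dots> \<le> (\<Sum>i\<in>(UNIV::'q set). f M)" by (rule sum_mono) (use fmono lp Mge in blast)
  also have "\<dots> = real CARD('q) * f M" by simp
  finally have "1 / c < f M" using assms(3)
    by (simp add: field_simps)
  hence "1 / c < (t*M/(1+t*M))^2" using feq Mp by simp
  hence "sqrt (1/c) < sqrt ((t*M/(1+t*M))^2)" by (rule real_sqrt_less_mono)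
  hence "sqrt (1/c) < t*M/(1+t*M)" using t Mp by simp
  hence "1 / sqrt c < t*M/(1+t*M)" by (simp add: real_sqrt_divide)
  moreover have "sqrt c > 0" using assms(3) by simp
  moreover have "1 + t*M > 0" using t Mp by (simp add: add_pos_pos)
  ultimately have "1 + t*M < sqrt c * (t*M)"
    by (simp add: divide_simps mult_ac)
  hence "1 < (sqrt c - 1) * t * M" by (simp add: algebra_simps)
  thus ?thesis unfolding M_def[symmetric] t_def[symmetric] using Mp
    by (simp add: field_simps)
qed

end
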